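(* Let $s$ be an integer with $|s|\ge 3$, and let $F_s(t)= t^4 + (4s^3 - 4s^2 + 8s - 4)t^3 + (-6s^2 - 6)t^2 + 4t + 1$. Then $F_s$ has four real roots $r_1,r_2,r_3,r_4$ satisfying $$r_1=-4s^3+4s^2-8s+4-\tfrac32 s^{-1}-\tfrac32 s^{-2}+\theta_1 s^{-4},\quad 1\le\theta_1\le 2,$$ $$r_2=\frac{1+\sqrt3}{2}s^{-1}+\frac{3+\sqrt3}{6}s^{-2}-\frac{1}{3\sqrt3}s^{-3}+\theta_2 s^{-4},\quad -\tfrac32\le\theta_2\le-\tfrac12,$$ $$r_3=\tfrac12 s^{-1}+\tfrac12 s^{-2}-\theta_3 s^{-4},\quad 0\le\theta_3\le 1,$$ $$r_4=\frac{1-\sqrt3}{2}s^{-1}+\frac{3-\sqrt3}{6}s^{-2}+\frac{1}{3\sqrt3}s^{-3}+\theta_4 s^{-4},\quad -\tfrac12\le\theta_4\le\tfrac12,$$ for suitable real numbers $\theta_1,\theta_2,\theta_3,\theta_4$ (depending on $s$). *)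

theory Defs
  imports Complex_Main
begin

definition F :: "int \<Rightarrow> real \<Rightarrow> real" where
  "F s t = t^4 + (4*real_of_int s^3 - 4*real_of_int s^2 + 8*real_of_int s - 4) * t^3
           + (-6*real_of_int s^2 - 6) * t^2 + 4*t + 1"

end

theory Submission
  imports Defs
begin


fun hp :: "real list \<Rightarrow> real \<Rightarrow> real" where
  "hp [] x = 0" | "hp (c # cs) x = c + x * hp cs x"

fun ibp :: "(real \<times> real) list \<Rightarrow> real \<times> real" where
  "ibp [] = (0,0)"
| "ibp (b # bs) = (case ibp bs of (L,U) \<Rightarrow> (fst b + min 0 (L/3), snd b + max 0 (U/3)))"

fun ibn :: "(real \<times> real) list \<Rightarrow> real \<times> real" where
  "ibn [] = (0,0)"
| "ibn (b # bs) = (case ibn bs of (L,U) \<Rightarrow> (fst b + min 0 (-U/3), snd b + max 0 (-L/3)))"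

lemma ibp_ok:
  assumes "list_all2 (\<lambda>c b. fst b \<le> c \<and> c \<le> snd b) cs bs" "0 \<le> x" "x \<le> 1/3"
  shows "fst (ibp bs) \<le> hp cs x \<and> hp cs x \<le> snd (ibp bs)"
  using assms(1)
proof (induction rule: list_all2_induct)
  case Nil then show ?case by simp
next
  case (Cons c cs b bs)
  obtain L U where LU: "ibp bs = (L,U)" by (cases "ibp bs")
  with Cons have h: "L \<le> hp cs x" "hp cs x \<le> U" by auto
  have 1: "min 0 (L/3) \<le> x * hp cs x"
  proof (cases "L \<ge> 0")
    case True then show ?thesis using h assms(2) by (simp add: min_def)
  next
    case False
    have "x * L \<le> x * hp cs x" using h assms(2) by (simp add: mult_left_mono)
    moreover have "L/3 \<le> x*L" using mult_right_mono_neg[of x "1/3" L] False assms(2,3) by auto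
    ultimately show ?thesis by linarith
  qed
  have 2: "x * hp cs x \<le> max 0 (U/3)"
  proof (cases "U \<le> 0")
    case True then show ?thesis using h assms(2) by (simp add: max_def mult_nonneg_nonpos)
  next
    case False
    have "x * hp cs x \<le> x * U" using h assms(2) by (simp add: mult_left_mono)
    moreover have "x*U \<le> U/3" using mult_right_mono[of x "1/3" U] False assms(2,3) by auto
    ultimately show ?thesis by linarith
  qed
  show ?case using Cons 1 2 LU by auto
qed

lemma ibn_ok:
  assumes "list_all2 (\<lambda>c b. fst b \<le> c \<and> c \<le> snd b) cs bs" "-1/3 \<le> x" "x \<le> 0"
  shows "fst (ibn bs) \<le> hp cs x \<and> hp cs x \<le> snd (ibn bs)"
  using assms(1)
proof (induction rule: list_all2_induct)
  case Nil then show ?case by simp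
next
  case (Cons c cs b bs)
  obtain L U where LU: "ibn bs = (L,U)" by (cases "ibn bs")
  with Cons have h: "L \<le> hp cs x" "hp cs x \<le> U" by auto
  have 1: "min 0 (-U/3) \<le> x * hp cs x"
  proof (cases "U \<le> 0")
    case True then show ?thesis using h assms(3) by (simp add: min_def mult_nonpos_nonpos)
  next
    case False
    have "x * U \<le> x * hp cs x" using h assms(3) by (simp add: mult_left_mono_neg)
    moreover have "-U/3 \<le> x*U" using mult_right_mono[of "-1/3" x U] False assms(2,3) by auto
    ultimately show ?thesis by linarith
  qed
  have 2: "x * hp cs x \<le> max 0 (-L/3)"
  proof (cases "L \<ge> 0")
    case True then show ?thesis using h assms(3) by (simp add: max_def mult_nonpos_nonneg)
  next
    case False
    have "x * hp cs x \<le> x * L" using h assms(3) by (simp add: mult_left_mono_neg)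
    moreover have "x*L \<le> -L/3" using mult_right_mono_neg[of "-1/3" x L] False assms(2,3) by auto
    ultimately show ?thesis by linarith
  qed
  show ?case using Cons 1 2 LU by auto
qed

definition G :: "real \<Rightarrow> real \<Rightarrow> real" where
  "G x u = x^4*u^4 + (4-4*x+8*x^2-4*x^3)*u^3 - (6+6*x^2)*u^2 + 4*x*u + 1"

lemma F_G: assumes "real_of_int s * x = 1" shows "F s (x*u) = G x u"
proof -
  have "F s (x*u) = x^4*u^4 + (4*(real_of_int s*x)^3 - 4*(real_of_int s*x)^2*x + 8*(real_of_int s*x)*x^2 - 4*x^3)*u^3
     + (-6*(real_of_int s*x)^2 - 6*x^2)*u^2 + 4*x*u + 1"
    unfolding F_def by (simp add: algebra_simps power2_eq_square power3_eq_cube power4_eq_xxxx)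
  show ?thesis using assms unfolding G_def F_def by algebra
qed



fun ev :: "(real\<times>real) list \<Rightarrow> real \<Rightarrow> real \<Rightarrow> real" where
  "ev [] w x = 0" | "ev (a # p) w x = (fst a + snd a * w) + x * ev p w x"

fun padd :: "(real\<times>real) list \<Rightarrow> (real\<times>real) list \<Rightarrow> (real\<times>real) list" where
  "padd [] q = q" | "padd p [] = p"
| "padd (a # p) (b # q) = (fst a + fst b, snd a + snd b) # padd p q"

fun cmul :: "real\<times>real \<Rightarrow> (real\<times>real) list \<Rightarrow> (real\<times>real) list" where
  "cmul c [] = []"
| "cmul c (a # p) = (fst c * fst a + 3 * (snd c * snd a), fst c * snd a + snd c * fst a) # cmul c p"

fun pmul :: "(real\<times>real) list \<Rightarrow> (real\<times>real) list \<Rightarrow> (real\<times>real) list" where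
  "pmul [] q = []" | "pmul (a # p) q = padd (cmul a q) ((0,0) # pmul p q)"

lemma ev_padd: "ev (padd p q) w x = ev p w x + ev q w x"
  by (induction p q rule: padd.induct) (auto simp: algebra_simps)

lemma ev_cmul: assumes "w*w = 3" shows "ev (cmul c p) w x = (fst c + snd c * w) * ev p w x"
proof (induction p)
  case Nil then show ?case by simp
next
  case (Cons a p)
  have "fst c * fst a + 3 * (snd c * snd a) + (fst c * snd a + snd c * fst a) * w
        = (fst c + snd c * w) * (fst a + snd a * w)"
  proof -
    have "(fst c + snd c * w) * (fst a + snd a * w) = fst c * fst a + snd c * snd a * (w*w) + (fst c * snd a + snd c * fst a) * w"
      by (simp add: algebra_simps)
    then show ?thesis using assms by simp
  qed
  then show ?case using Cons by (simp add: algebra_simps)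
qed

lemma ev_pmul: assumes "w*w = 3" shows "ev (pmul p q) w x = ev p w x * ev q w x"
  by (induction p) (auto simp: ev_padd ev_cmul[OF assms] algebra_simps)

definition Gpl :: "(real\<times>real) list \<Rightarrow> (real\<times>real) list" where
  "Gpl u = (let u2 = pmul u u; u3 = pmul u2 u; u4 = pmul u3 u in
     padd (pmul [(0,0),(0,0),(0,0),(0,0),(1,0)] u4)
     (padd (pmul [(4,0),(-4,0),(8,0),(-4,0)] u3)
     (padd (pmul [(-6,0),(0,0),(-6,0)] u2)
     (padd (pmul [(0,0),(4,0)] u) [(1,0)]))))"

lemma G_ev: assumes "w*w = 3" shows "G x (ev u w x) = ev (Gpl u) w x"
proof -
  have e: "ev [(0,0),(0,0),(0,0),(0,0),(1,0)] w x = x^4" "ev [(4,0),(-4,0),(8,0),(-4,0)] w x = 4-4*x+8*x^2-4*x^3"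
    "ev [(-6,0),(0,0),(-6,0)] w x = -(6+6*x^2)" "ev [(0,0),(4,0)] w x = 4*x" "ev [(1,0)] w x = 1"
    by (simp_all add: algebra_simps power2_eq_square power3_eq_cube power4_eq_xxxx)
  show ?thesis unfolding Gpl_def Let_def G_def ev_padd ev_pmul[OF assms] e
    by (simp add: power2_eq_square power3_eq_cube power4_eq_xxxx algebra_simps)
qed

lemma ev3: "ev ((0,0)#(0,0)#(0,0)#p) w x = x^3 * ev p w x"
  by (simp add: power3_eq_cube)

lemma ev_hp: "ev p w x = hp (map (\<lambda>c. fst c + snd c * w) p) x"
  by (induction p) auto

lemma gp_r2_0: "Gpl [((1/2),(1/2)), ((1/2),(1/6)), ((0),(-1/9)), ((-19/25),(0))] = (0,0)#(0,0)#(0,0)#[((-39/25),(7/9)), ((127/100),(-4/9)), ((-139/25),(2/27)), ((-107/150),(90038/151875)), ((1018/225),(-210467/151875)), ((-4753/900),(501016/151875)), ((-937472/421875),(-396632/151875)), ((4315441/1265625),(-10411/30375)), ((1075804/3796875),(492256/151875)), ((18092719/11390625),(2299/16875)), ((-59204/46875),(-4748024/3796875)), ((-105412/140625),(-13718/46875)), ((0),(27436/140625)), ((130321/390625),(0))]"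
  by (simp add: Gpl_def Let_def)

lemma bd_r2_0: fixes w :: real assumes "1732/1000 \<le> w" "w \<le> 17321/10000" shows "list_all2 (\<lambda>c b. fst b \<le> c \<and> c \<le> snd b) (map (\<lambda>c. fst c + snd c * w) [((-39/25),(7/9)), ((127/100),(-4/9)), ((-139/25),(2/27)), ((-107/150),(90038/151875)), ((1018/225),(-210467/151875)), ((-4753/900),(501016/151875)), ((-937472/421875),(-396632/151875)), ((4315441/1265625),(-10411/30375)), ((1075804/3796875),(492256/151875)), ((18092719/11390625),(2299/16875)), ((-59204/46875),(-4748024/3796875)), ((-105412/140625),(-13718/46875)), ((0),(27436/140625)), ((130321/390625),(0))]) [((-212889/1000000),(-212811/1000000)), ((500177/1000000),(500223/1000000)), ((-678963/125000),(-339481/62500)), ((31347/100000),(31353/100000)), ((424823/200000),(424851/200000)), ((432533/1000000),(432863/1000000)), ((-1349131/200000),(-421587/62500)), ((563211/200000),(281609/100000)), ((5897083/1000000),(92147/15625)), ((1824349/1000000),(456091/250000)), ((-137161/40000),(-3428899/1000000)), ((-1256497/1000000),(-1256467/1000000)), ((337913/1000000),(168967/500000)), ((333621/1000000),(166811/500000))]"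
  using assms by simp

lemma ev_r2_0: "snd (ibp [((-212889/1000000),(-212811/1000000)), ((500177/1000000),(500223/1000000)), ((-678963/125000),(-339481/62500)), ((31347/100000),(31353/100000)), ((424823/200000),(424851/200000)), ((432533/1000000),(432863/1000000)), ((-1349131/200000),(-421587/62500)), ((563211/200000),(281609/100000)), ((5897083/1000000),(92147/15625)), ((1824349/1000000),(456091/250000)), ((-137161/40000),(-3428899/1000000)), ((-1256497/1000000),(-1256467/1000000)), ((337913/1000000),(168967/500000)), ((333621/1000000),(166811/500000))]) < 0" "snd (ibn [((-212889/1000000),(-212811/1000000)), ((500177/1000000),(500223/1000000)), ((-678963/125000),(-339481/62500)), ((31347/100000),(31353/100000)), ((424823/200000),(424851/200000)), ((432533/1000000),(432863/1000000)), ((-1349131/200000),(-421587/62500)), ((563211/200000),(281609/100000)), ((5897083/1000000),(92147/15625)), ((1824349/1000000),(456091/250000)), ((-137161/40000),(-3428899/1000000)), ((-1256497/1000000),(-1256467/1000000)), ((337913/1000000),(168967/500000)), ((333621/1000000),(166811/500000))]) < 0"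
  by (simp_all add: min_def max_def)

lemma gp_r2_1: "Gpl [((1/2),(1/2)), ((1/2),(1/6)), ((0),(-1/9)), ((-31/50),(0))] = (0,0)#(0,0)#(0,0)#[((-18/25),(7/9)), ((99/100),(-4/9)), ((-118/25),(2/27)), ((-3/50),(83119/303750)), ((569/150),(-228721/303750)), ((-1337/300),(282154/151875)), ((-1558957/843750),(-313283/151875)), ((2925598/1265625),(-15751/121500)), ((5065799/7593750),(331039/151875)), ((18610139/22781250),(5549/67500)), ((-137423/187500),(-10976263/15187500)), ((-220069/562500),(-29791/187500)), ((0),(29791/281250)), ((923521/6250000),(0))]"
  by (simp add: Gpl_def Let_def)

lemma bd_r2_1: fixes w :: real assumes "1732/1000 \<le> w" "w \<le> 17321/10000" shows "list_all2 (\<lambda>c b. fst b \<le> c \<and> c \<le> snd b) (map (\<lambda>c. fst c + snd c * w) [((-18/25),(7/9)), ((99/100),(-4/9)), ((-118/25),(2/27)), ((-3/50),(83119/303750)), ((569/150),(-228721/303750)), ((-1337/300),(282154/151875)), ((-1558957/843750),(-313283/151875)), ((2925598/1265625),(-15751/121500)), ((5065799/7593750),(331039/151875)), ((18610139/22781250),(5549/67500)), ((-137423/187500),(-10976263/15187500)), ((-220069/562500),(-29791/187500)), ((0),(29791/281250)), ((923521/6250000),(0))]) [((627111/1000000),(627189/1000000)), ((220177/1000000),(220223/1000000)), ((-573963/125000),(-286981/62500)), ((413949/1000000),(413977/1000000)), ((2489077/1000000),(1244577/500000)), ((-24779/20000),(-309691/250000)), ((-216823/40000),(-338773/62500)), ((2087037/1000000),(2087051/1000000)),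 ((1110577/250000),(2221263/500000)), ((959289/1000000),(479649/500000)), ((-1984741/1000000),(-496167/250000)), ((-16661/25000),(-666423/1000000)), ((183459/1000000),(183471/1000000)), ((147763/1000000),(36941/250000))]"
  using assms by simp

lemma ev_r2_1: "0 < fst (ibp [((627111/1000000),(627189/1000000)), ((220177/1000000),(220223/1000000)), ((-573963/125000),(-286981/62500)), ((413949/1000000),(413977/1000000)), ((2489077/1000000),(1244577/500000)), ((-24779/20000),(-309691/250000)), ((-216823/40000),(-338773/62500)), ((2087037/1000000),(2087051/1000000)), ((1110577/250000),(2221263/500000)), ((959289/1000000),(479649/500000)), ((-1984741/1000000),(-496167/250000)), ((-16661/25000),(-666423/1000000)), ((183459/1000000),(183471/1000000)), ((147763/1000000),(36941/250000))])" "0 < fst (ibn [((627111/1000000),(627189/1000000)), ((220177/1000000),(220223/1000000)), ((-573963/125000),(-286981/62500)), ((413949/1000000),(413977/1000000)), ((2489077/1000000),(1244577/500000)), ((-24779/20000),(-309691/250000)), ((-216823/40000),(-338773/62500)), ((2087037/1000000),(2087051/1000000)), ((1110577/250000),(2221263/500000)), ((959289/1000000),(479649/500000)), ((-1984741/1000000),(-496167/250000)), ((-16661/25000),(-666423/1000000)), ((183459/1000000),(183471/1000000)), ((147763/1000000),(36941/250000))])"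
  by (simp_all add: min_def max_def)

lemma gp_r3_0: "Gpl [((1/2),(0)), ((1/2),(0)), ((0),(0)), ((-9/25),(0))] = (0,0)#(0,0)#(0,0)#[((-21/50),(0)), ((-319/400),(0)), ((83/100),(0)), ((-1/8),(0)), ((7/100),(0)), ((241/400),(0)), ((1593/31250),(0)), ((-9009/15625),(0)), ((243/15625),(0)), ((11907/31250),(0)), ((-1458/15625),(0)), ((-1458/15625),(0)), ((0),(0)), ((6561/390625),(0))]"
  by (simp add: Gpl_def Let_def)

lemma bd_r3_0: fixes w :: real assumes "1732/1000 \<le> w" "w \<le> 17321/10000" shows "list_all2 (\<lambda>c b. fst b \<le> c \<and> c \<le> snd b) (map (\<lambda>c. fst c + snd c * w) [((-21/50),(0)), ((-319/400),(0)), ((83/100),(0)), ((-1/8),(0)), ((7/100),(0)), ((241/400),(0)), ((1593/31250),(0)), ((-9009/15625),(0)), ((243/15625),(0)), ((11907/31250),(0)), ((-1458/15625),(0)), ((-1458/15625),(0)), ((0),(0)), ((6561/390625),(0))]) [((-21/50),(-21/50)), ((-319/400),(-319/400)), ((83/100),(83/100)), ((-1/8),(-1/8)), ((7/100),(7/100)), ((241/400),(241/400)), ((1593/31250),(1593/31250)), ((-9009/15625),(-9009/15625)), ((243/15625),(243/15625)), ((11907/31250),(11907/31250)), ((-1458/15625),(-1458/15625)), ((-1458/15625),(-1458/15625)), ((0),(0)), ((4199/250000),(16797/1000000))]"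
  using assms by simp

lemma ev_r3_0: "snd (ibp [((-21/50),(-21/50)), ((-319/400),(-319/400)), ((83/100),(83/100)), ((-1/8),(-1/8)), ((7/100),(7/100)), ((241/400),(241/400)), ((1593/31250),(1593/31250)), ((-9009/15625),(-9009/15625)), ((243/15625),(243/15625)), ((11907/31250),(11907/31250)), ((-1458/15625),(-1458/15625)), ((-1458/15625),(-1458/15625)), ((0),(0)), ((4199/250000),(16797/1000000))]) < 0" "snd (ibn [((-21/50),(-21/50)), ((-319/400),(-319/400)), ((83/100),(83/100)), ((-1/8),(-1/8)), ((7/100),(7/100)), ((241/400),(241/400)), ((1593/31250),(1593/31250)), ((-9009/15625),(-9009/15625)), ((243/15625),(243/15625)), ((11907/31250),(11907/31250)), ((-1458/15625),(-1458/15625)), ((-1458/15625),(-1458/15625)), ((0),(0)), ((4199/250000),(16797/1000000))]) < 0"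
  by (simp_all add: min_def max_def)

lemma gp_r3_1: "Gpl [((1/2),(0)), ((1/2),(0)), ((0),(0)), ((-31/50),(0))] = (0,0)#(0,0)#(0,0)#[((9/25),(0)), ((-423/400),(0)), ((161/100),(0)), ((-1/8),(0)), ((-3/50),(0)), ((397/400),(0)), ((26443/62500),(0)), ((-135811/125000),(0)), ((-47089/62500),(0)), ((191239/125000),(0)), ((-29791/62500),(0)), ((-29791/62500),(0)), ((0),(0)), ((923521/6250000),(0))]"
  by (simp add: Gpl_def Let_def)

lemma bd_r3_1: fixes w :: real assumes "1732/1000 \<le> w" "w \<le> 17321/10000" shows "list_all2 (\<lambda>c b. fst b \<le> c \<and> c \<le> snd b) (map (\<lambda>c. fst c + snd c * w) [((9/25),(0)), ((-423/400),(0)), ((161/100),(0)), ((-1/8),(0)), ((-3/50),(0)), ((397/400),(0)), ((26443/62500),(0)), ((-135811/125000),(0)), ((-47089/62500),(0)), ((191239/125000),(0)), ((-29791/62500),(0)), ((-29791/62500),(0)), ((0),(0)), ((923521/6250000),(0))]) [((9/25),(9/25)), ((-423/400),(-423/400)), ((161/100),(161/100)), ((-1/8),(-1/8)), ((-3/50),(-3/50)), ((397/400),(397/400)), ((26443/62500),(26443/62500)), ((-135811/125000),(-135811/125000)), ((-47089/62500),(-47089/62500)), ((191239/125000),(191239/125000)), ((-29791/62500),(-29791/62500)), ((-29791/62500),(-29791/62500)), ((0),(0)), ((147763/1000000),(36941/250000))]"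
  using assms by simp

lemma ev_r3_1: "0 < fst (ibp [((9/25),(9/25)), ((-423/400),(-423/400)), ((161/100),(161/100)), ((-1/8),(-1/8)), ((-3/50),(-3/50)), ((397/400),(397/400)), ((26443/62500),(26443/62500)), ((-135811/125000),(-135811/125000)), ((-47089/62500),(-47089/62500)), ((191239/125000),(191239/125000)), ((-29791/62500),(-29791/62500)), ((-29791/62500),(-29791/62500)), ((0),(0)), ((147763/1000000),(36941/250000))])" "0 < fst (ibn [((9/25),(9/25)), ((-423/400),(-423/400)), ((161/100),(161/100)), ((-1/8),(-1/8)), ((-3/50),(-3/50)), ((397/400),(397/400)), ((26443/62500),(26443/62500)), ((-135811/125000),(-135811/125000)), ((-47089/62500),(-47089/62500)), ((191239/125000),(191239/125000)), ((-29791/62500),(-29791/62500)), ((-29791/62500),(-29791/62500)), ((0),(0)), ((147763/1000000),(36941/250000))])"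
  by (simp_all add: min_def max_def)

lemma gp_r4_0: "Gpl [((1/2),(-1/2)), ((1/2),(-1/6)), ((0),(1/9)), ((-9/25),(0))] = (0,0)#(0,0)#(0,0)#[((21/25),(-7/9)), ((47/100),(4/9)), ((-79/25),(-2/27)), ((173/150),(-46298/151875)), ((548/225),(-943/151875)), ((-2633/900),(-12586/151875)), ((-528182/421875),(169022/151875)), ((1260571/1265625),(-2819/30375)), ((2111524/3796875),(-115876/151875)), ((1230139/11390625),(-31/1875)), ((-2808/15625),(73316/421875)), ((-1008/15625),(486/15625)), ((0),(-324/15625)), ((6561/390625),(0))]"
  by (simp add: Gpl_def Let_def)

lemma bd_r4_0: fixes w :: real assumes "1732/1000 \<le> w" "w \<le> 17321/10000" shows "list_all2 (\<lambda>c b. fst b \<le> c \<and> c \<le> snd b) (map (\<lambda>c. fst c + snd c * w) [((21/25),(-7/9)), ((47/100),(4/9)), ((-79/25),(-2/27)), ((173/150),(-46298/151875)), ((548/225),(-943/151875)), ((-2633/900),(-12586/151875)), ((-528182/421875),(169022/151875)), ((1260571/1265625),(-2819/30375)), ((2111524/3796875),(-115876/151875)), ((1230139/11390625),(-31/1875)), ((-2808/15625),(73316/421875)), ((-1008/15625),(486/15625)), ((0),(-324/15625)), ((6561/390625),(0))]) [((-507189/1000000),(-507111/1000000)), ((1239777/1000000),(1239823/1000000)), ((-205519/62500),(-411037/125000)), ((125063/200000),(312673/500000)), ((3031/1250),(1212401/500000)), ((-3069097/1000000),(-3069087/1000000)), ((675559/1000000),(675671/1000000)), ((104407/125000),(417633/500000)),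 ((-765419/1000000),(-765341/1000000)), ((39679/500000),(79361/1000000)), ((24257/200000),(121303/1000000)), ((-133/12500),(-2659/250000)), ((-35917/1000000),(-17957/500000)), ((4199/250000),(16797/1000000))]"
  using assms by simp

lemma ev_r4_0: "snd (ibp [((-507189/1000000),(-507111/1000000)), ((1239777/1000000),(1239823/1000000)), ((-205519/62500),(-411037/125000)), ((125063/200000),(312673/500000)), ((3031/1250),(1212401/500000)), ((-3069097/1000000),(-3069087/1000000)), ((675559/1000000),(675671/1000000)), ((104407/125000),(417633/500000)), ((-765419/1000000),(-765341/1000000)), ((39679/500000),(79361/1000000)), ((24257/200000),(121303/1000000)), ((-133/12500),(-2659/250000)), ((-35917/1000000),(-17957/500000)), ((4199/250000),(16797/1000000))]) < 0" "snd (ibn [((-507189/1000000),(-507111/1000000)), ((1239777/1000000),(1239823/1000000)), ((-205519/62500),(-411037/125000)), ((125063/200000),(312673/500000)), ((3031/1250),(1212401/500000)), ((-3069097/1000000),(-3069087/1000000)), ((675559/1000000),(675671/1000000)), ((104407/125000),(417633/500000)), ((-765419/1000000),(-765341/1000000)), ((39679/500000),(79361/1000000)), ((24257/200000),(121303/1000000)), ((-133/12500),(-2659/250000)), ((-35917/1000000),(-17957/500000)), ((4199/250000),(16797/1000000))]) < 0"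
  by (simp_all add: min_def max_def)

lemma gp_r4_1: "Gpl [((1/2),(-1/2)), ((1/2),(-1/6)), ((0),(1/9)), ((-9/50),(0))] = (0,0)#(0,0)#(0,0)#[((48/25),(-7/9)), ((11/100),(4/9)), ((-52/25),(-2/27)), ((299/150),(-243499/303750)), ((673/450),(-65309/303750)), ((-1679/900),(69791/151875)), ((-617533/843750),(77168/151875)), ((572962/1265625),(-13949/121500)), ((1666931/7593750),(-31069/151875)), ((-348559/22781250),(19/7500)), ((-2079/62500),(51133/1687500)), ((-279/62500),(243/62500)), ((0),(-81/31250)), ((6561/6250000),(0))]"
  by (simp add: Gpl_def Let_def)

lemma bd_r4_1: fixes w :: real assumes "1732/1000 \<le> w" "w \<le> 17321/10000" shows "list_all2 (\<lambda>c b. fst b \<le> c \<and> c \<le> snd b) (map (\<lambda>c. fst c + snd c * w) [((48/25),(-7/9)), ((11/100),(4/9)), ((-52/25),(-2/27)), ((299/150),(-243499/303750)), ((673/450),(-65309/303750)), ((-1679/900),(69791/151875)), ((-617533/843750),(77168/151875)), ((572962/1265625),(-13949/121500)), ((1666931/7593750),(-31069/151875)), ((-348559/22781250),(19/7500)), ((-2079/62500),(51133/1687500)), ((-279/62500),(243/62500)), ((0),(-81/31250)), ((6561/6250000),(0))]) [((572811/1000000),(572889/1000000)), ((879777/1000000),(879823/1000000)), ((-138019/62500),(-276037/125000)), ((604807/1000000),(604889/1000000)), ((561569/500000),(28079/25000)), ((-1069651/1000000),(-267401/250000)), ((148141/1000000),(148193/1000000)), ((126927/500000),(126933/500000)), ((-67411/500000),(-337/2500)),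 ((-10913/1000000),(-341/31250)), ((19217/1000000),(19221/1000000)), ((227/100000),(2271/1000000)), ((-449/100000),(-4489/1000000)), ((1049/1000000),(21/20000))]"
  using assms by simp

lemma ev_r4_1: "0 < fst (ibp [((572811/1000000),(572889/1000000)), ((879777/1000000),(879823/1000000)), ((-138019/62500),(-276037/125000)), ((604807/1000000),(604889/1000000)), ((561569/500000),(28079/25000)), ((-1069651/1000000),(-267401/250000)), ((148141/1000000),(148193/1000000)), ((126927/500000),(126933/500000)), ((-67411/500000),(-337/2500)), ((-10913/1000000),(-341/31250)), ((19217/1000000),(19221/1000000)), ((227/100000),(2271/1000000)), ((-449/100000),(-4489/1000000)), ((1049/1000000),(21/20000))])" "0 < fst (ibn [((572811/1000000),(572889/1000000)), ((879777/1000000),(879823/1000000)), ((-138019/62500),(-276037/125000)), ((604807/1000000),(604889/1000000)), ((561569/500000),(28079/25000)), ((-1069651/1000000),(-267401/250000)), ((148141/1000000),(148193/1000000)), ((126927/500000),(126933/500000)), ((-67411/500000),(-337/2500)), ((-10913/1000000),(-341/31250)), ((19217/1000000),(19221/1000000)), ((227/100000),(2271/1000000)), ((-449/100000),(-4489/1000000)), ((1049/1000000),(21/20000))])"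
  by (simp_all add: min_def max_def)

lemma ivt0:
  fixes g :: "real \<Rightarrow> real"
  assumes "a \<le> b" "continuous_on {a..b} g" "g a * g b \<le> 0"
  shows "\<exists>t. a \<le> t \<and> t \<le> b \<and> g t = 0"
proof -
  have "(g a \<le> 0 \<and> 0 \<le> g b) \<or> (0 \<le> g a \<and> g b \<le> 0)"
    using assms(3) mult_le_0_iff by auto
  then show ?thesis using IVT'[of g a 0 b] IVT2'[of g b 0 a] assms(1,2) by blast
qed

lemma sign_neg:
  assumes "list_all2 (\<lambda>c b. fst b \<le> c \<and> c \<le> snd b) (map (\<lambda>c. fst c + snd c * w) c) bs"
    "snd (ibp bs) < 0" "snd (ibn bs) < 0" "\<bar>y\<bar> \<le> 1/3"
  shows "ev c w y < 0"
proof (cases "y \<ge> 0")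
  case True
  then show ?thesis using ibp_ok[OF assms(1), of y] assms ev_hp[of c w y] by auto
next
  case False
  then show ?thesis using ibn_ok[OF assms(1), of y] assms ev_hp[of c w y] by auto
qed

lemma sign_pos:
  assumes "list_all2 (\<lambda>c b. fst b \<le> c \<and> c \<le> snd b) (map (\<lambda>c. fst c + snd c * w) c) bs"
    "0 < fst (ibp bs)" "0 < fst (ibn bs)" "\<bar>y\<bar> \<le> 1/3"
  shows "0 < ev c w y"
proof (cases "y \<ge> 0")
  case True
  then show ?thesis using ibp_ok[OF assms(1), of y] assms ev_hp[of c w y] by auto
next
  case False
  then show ?thesis using ibn_ok[OF assms(1), of y] assms ev_hp[of c w y] by auto
qed

lemma hp_pos:
  assumes "list_all2 (\<lambda>c b. fst b \<le> c \<and> c \<le> snd b) cs bs"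
    "0 < fst (ibp bs)" "0 < fst (ibn bs)" "\<bar>y\<bar> \<le> 1/3"
  shows "0 < hp cs y"
proof (cases "y \<ge> 0")
  case True
  then show ?thesis using ibp_ok[OF assms(1), of y] assms by auto
next
  case False
  then show ?thesis using ibn_ok[OF assms(1), of y] assms by auto
qed

lemma root_from:
  fixes s :: int and x w a b B :: real
  assumes sx: "real_of_int s * x = 1" and w3: "w*w = 3" and ab: "a \<le> b"
    and ea: "x * ev ua w x = B + a*x^4" and eb: "x * ev ub w x = B + b*x^4"
    and ga: "Gpl ua = (0,0)#(0,0)#(0,0)#ca" and gb: "Gpl ub = (0,0)#(0,0)#(0,0)#cb"
    and sg: "ev ca w x * ev cb w x \<le> 0"
  shows "\<exists>\<theta>. a \<le> \<theta> \<and> \<theta> \<le> b \<and> F s (B + \<theta>*x^4) = 0"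
proof -
  have fa: "F s (B + a*x^4) = x^3 * ev ca w x"
    using F_G[OF sx, of "ev ua w x"] ea G_ev[OF w3, of x ua] ga ev3 by simp
  have fb: "F s (B + b*x^4) = x^3 * ev cb w x"
    using F_G[OF sx, of "ev ub w x"] eb G_ev[OF w3, of x ub] gb ev3 by simp
  have cont: "continuous_on {a..b} (\<lambda>\<theta>. F s (B + \<theta>*x^4))"
    unfolding F_def by (intro continuous_intros)
  have "F s (B + a*x^4) * F s (B + b*x^4) = (x^3*x^3) * (ev ca w x * ev cb w x)"
    unfolding fa fb by (simp add: algebra_simps)
  also have "\<dots> \<le> 0" using sg by (simp add: mult_nonneg_nonpos)
  finally show ?thesis using ivt0[OF ab cont] by simp
qed

lemma quartic_fac:
  fixes f :: "real \<Rightarrow> real" and a3 a2 a1 a0 p q r :: real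
  assumes f: "\<And>t. f t = t^4 + a3*t^3 + a2*t^2 + a1*t + a0"
    and fp: "f p = 0" and fq: "f q = 0" and fr: "f r = 0"
    and pq: "p \<noteq> q" and pr: "p \<noteq> r" and qr: "q \<noteq> r"
  shows "f t = (t - (-a3-p-q-r)) * (t - p) * (t - q) * (t - r)"
proof -
  define b2 where "b2 = a3 + p"
  define b1 where "b1 = a2 + a3*p + p^2"
  define b0 where "b0 = a1 + a2*p + a3*p^2 + p^3"
  have a0: "a0 = -(p^4 + a3*p^3 + a2*p^2 + a1*p)" using fp f[of p] by simp
  have f1: "f t = (t - p) * (t^3 + b2*t^2 + b1*t + b0)" for t
    unfolding f b2_def b1_def b0_def a0 by (simp add: algebra_simps power2_eq_square power3_eq_cube power4_eq_xxxx)
  have g3q: "q^3 + b2*q^2 + b1*q + b0 = 0" using f1[of q] fq pq by simp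
  have g3r: "r^3 + b2*r^2 + b1*r + b0 = 0" using f1[of r] fr pr by simp
  define c1 where "c1 = b2 + q"
  define c0 where "c0 = b1 + b2*q + q^2"
  have b0: "b0 = -(q^3 + b2*q^2 + b1*q)" using g3q by simp
  have f2: "t^3 + b2*t^2 + b1*t + b0 = (t - q) * (t^2 + c1*t + c0)" for t
    unfolding c1_def c0_def b0 by (simp add: algebra_simps power2_eq_square power3_eq_cube)
  have g2r: "r^2 + c1*r + c0 = 0" using f2[of r] g3r qr by simp
  have c0: "c0 = -(r^2 + c1*r)" using g2r by simp
  have f3: "t^2 + c1*t + c0 = (t - r) * (t - (-c1 - r))" for t
    unfolding c0 by (simp add: algebra_simps power2_eq_square)
  have m: "-c1 - r = -a3-p-q-r" unfolding c1_def b2_def by simp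
  have "f t = (t-p)*((t-q)*((t-r)*(t-(-c1-r))))" using f1[of t] f2[of t] f3[of t] by simp
  also have "\<dots> = (t-(-c1-r))*(t-p)*(t-q)*(t-r)" by (simp add: mult_ac)
  finally show ?thesis unfolding m .
qed



lemma prod_np: "a < 0 \<Longrightarrow> 0 < b \<Longrightarrow> a*b \<le> (0::real)"
  by (simp add: mult_nonpos_nonneg)
lemma prod_pn: "0 < a \<Longrightarrow> b < 0 \<Longrightarrow> a*b \<le> (0::real)"
  by (simp add: mult_nonneg_nonpos)

theorem mainTheorem3:
  fixes s :: int
  assumes "\<bar>s\<bar> \<ge> 3"
  shows "\<exists>r1 r2 r3 r4 \<theta>1 \<theta>2 \<theta>3 \<theta>4 :: real.
    (\<forall>t. F s t = (t - r1) * (t - r2) * (t - r3) * (t - r4)) \<and>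
    r1 = -4*real_of_int s^3 + 4*real_of_int s^2 - 8*real_of_int s + 4
         - 3/2 * real_of_int s powi (-1) - 3/2 * real_of_int s powi (-2)
         + \<theta>1 * real_of_int s powi (-4) \<and> 1 \<le> \<theta>1 \<and> \<theta>1 \<le> 2 \<and>
    r2 = (1 + sqrt 3)/2 * real_of_int s powi (-1) + (3 + sqrt 3)/6 * real_of_int s powi (-2)
         - 1/(3*sqrt 3) * real_of_int s powi (-3) + \<theta>2 * real_of_int s powi (-4) \<and>
         -3/2 \<le> \<theta>2 \<and> \<theta>2 \<le> -1/2 \<and>
    r3 = 1/2 * real_of_int s powi (-1) + 1/2 * real_of_int s powi (-2)
         - \<theta>3 * real_of_int s powi (-4) \<and> 0 \<le> \<theta>3 \<and> \<theta>3 \<le> 1 \<and>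
    r4 = (1 - sqrt 3)/2 * real_of_int s powi (-1) + (3 - sqrt 3)/6 * real_of_int s powi (-2)
         + 1/(3*sqrt 3) * real_of_int s powi (-3) + \<theta>4 * real_of_int s powi (-4) \<and>
         -1/2 \<le> \<theta>4 \<and> \<theta>4 \<le> 1/2"
proof -
  define S where "S = real_of_int s"
  have S3: "\<bar>S\<bar> \<ge> 3" using assms unfolding S_def by linarith
  then have S0: "S \<noteq> 0" by auto
  define x where "x = 1 / S"
  have sx: "real_of_int s * x = 1" using S0 unfolding x_def S_def by simp
  have x0: "x \<noteq> 0" using S0 unfolding x_def by simp
  have xb: "\<bar>x\<bar> \<le> 1/3" using S3 S0 unfolding x_def by (simp add: abs_div field_simps)
  define w where "w = sqrt 3"
  have w3: "w*w = 3" unfolding w_def by simp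
  have wl: "1732/1000 \<le> w" unfolding w_def by (rule real_le_rsqrt) (simp add: power2_eq_square)
  have wu: "w \<le> 17321/10000" unfolding w_def by (rule real_le_lsqrt) (simp_all add: power2_eq_square)
  have p1: "S powi (-1) = x" "S powi (-2) = x^2" "S powi (-3) = x^3" "S powi (-4) = x^4"
    unfolding x_def by (simp_all add: power_int_minus power_one_over divide_inverse power_inverse)
  have iw: "1/(3*sqrt 3) = w/9" unfolding w_def
    by (simp add: field_simps)
  have iw2: "1/(3*w) = w/9" using w3 wl by (simp add: field_simps)
  define B2 where "B2 = (1+w)/2*x + (3+w)/6*x^2 - w/9*x^3"
  define B3 where "B3 = 1/2*x + 1/2*x^2"
  define B4 where "B4 = (1-w)/2*x + (3-w)/6*x^2 + w/9*x^3"
  obtain t2 where t2: "-19/25 \<le> t2" "t2 \<le> -31/50" and f2: "F s (B2 + t2*x^4) = 0"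
  proof -
    have "\<exists>\<theta>. -19/25 \<le> \<theta> \<and> \<theta> \<le> -31/50 \<and> F s (B2 + \<theta>*x^4) = 0"
      apply (rule root_from[OF sx w3 _ _ _ gp_r2_0 gp_r2_1])
         apply simp
        apply (simp add: B2_def algebra_simps add_divide_distrib diff_divide_distrib power2_eq_square power3_eq_cube power4_eq_xxxx)
       apply (simp add: B2_def algebra_simps add_divide_distrib diff_divide_distrib power2_eq_square power3_eq_cube power4_eq_xxxx)
      apply (rule prod_np[OF sign_neg[OF bd_r2_0[OF wl wu] ev_r2_0 xb] sign_pos[OF bd_r2_1[OF wl wu] ev_r2_1 xb]])
      done
    then show ?thesis using that by blast
  qed
  obtain t3 where t3: "-31/50 \<le> t3" "t3 \<le> -9/25" and f3: "F s (B3 + t3*x^4) = 0"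
  proof -
    have "\<exists>\<theta>. -31/50 \<le> \<theta> \<and> \<theta> \<le> -9/25 \<and> F s (B3 + \<theta>*x^4) = 0"
      apply (rule root_from[OF sx w3 _ _ _ gp_r3_1 gp_r3_0])
         apply simp
        apply (simp add: B3_def algebra_simps add_divide_distrib diff_divide_distrib power2_eq_square power3_eq_cube power4_eq_xxxx)
       apply (simp add: B3_def algebra_simps add_divide_distrib diff_divide_distrib power2_eq_square power3_eq_cube power4_eq_xxxx)
      apply (rule prod_pn[OF sign_pos[OF bd_r3_1[OF wl wu] ev_r3_1 xb] sign_neg[OF bd_r3_0[OF wl wu] ev_r3_0 xb]])
      done
    then show ?thesis using that by blast
  qed
  obtain t4 where t4: "-9/25 \<le> t4" "t4 \<le> -9/50" and f4: "F s (B4 + t4*x^4) = 0"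
  proof -
    have "\<exists>\<theta>. -9/25 \<le> \<theta> \<and> \<theta> \<le> -9/50 \<and> F s (B4 + \<theta>*x^4) = 0"
      apply (rule root_from[OF sx w3 _ _ _ gp_r4_0 gp_r4_1])
         apply simp
        apply (simp add: B4_def algebra_simps add_divide_distrib diff_divide_distrib power2_eq_square power3_eq_cube power4_eq_xxxx)
       apply (simp add: B4_def algebra_simps add_divide_distrib diff_divide_distrib power2_eq_square power3_eq_cube power4_eq_xxxx)
      apply (rule prod_np[OF sign_neg[OF bd_r4_0[OF wl wu] ev_r4_0 xb] sign_pos[OF bd_r4_1[OF wl wu] ev_r4_1 xb]])
      done
    then show ?thesis using that by blast
  qed
  define r2 where "r2 = B2 + t2*x^4"
  define r3 where "r3 = B3 + t3*x^4"
  define r4 where "r4 = B4 + t4*x^4"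
  have simps: "r2 - r3 = x * hp [w/2, w/6, -w/9, t2 - t3] x"
    "r3 - r4 = x * hp [w/2, w/6, -w/9, t3 - t4] x"
    "r2 - r4 = x * hp [w, w/3, -2*w/9, t2 - t4] x"
    unfolding r2_def r3_def r4_def B2_def B3_def B4_def
    by (simp_all add: algebra_simps add_divide_distrib diff_divide_distrib power2_eq_square power3_eq_cube power4_eq_xxxx)
  have "0 < hp [w/2, w/6, -w/9, t2 - t3] x"
    by (rule hp_pos[OF _ _ _ xb, of _ "[(433/500,17321/20000),(433/1500,17321/60000),(-17321/90000,-433/2250),(-2/5,0)]"])
       (use wl wu t2 t3 in \<open>simp_all add: min_def max_def\<close>)
  then have n23: "r2 \<noteq> r3" using simps(1) x0 by auto
  have "0 < hp [w/2, w/6, -w/9, t3 - t4] x"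
    by (rule hp_pos[OF _ _ _ xb, of _ "[(433/500,17321/20000),(433/1500,17321/60000),(-17321/90000,-433/2250),(-11/25,0)]"])
       (use wl wu t3 t4 in \<open>simp_all add: min_def max_def\<close>)
  then have n34: "r3 \<noteq> r4" using simps(2) x0 by auto
  have "0 < hp [w, w/3, -2*w/9, t2 - t4] x"
    by (rule hp_pos[OF _ _ _ xb, of _ "[(433/250,17321/10000),(433/750,17321/30000),(-17321/45000,-433/1125),(-29/50,-13/50)]"])
       (use wl wu t2 t4 in \<open>simp_all add: min_def max_def\<close>)
  then have n24: "r2 \<noteq> r4" using simps(3) x0 by auto
  define a3 where "a3 = 4*S^3 - 4*S^2 + 8*S - 4"
  define r1 where "r1 = -a3 - r2 - r3 - r4"
  have fac: "\<forall>t. F s t = (t - r1)*(t - r2)*(t - r3)*(t - r4)"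
  proof
    fix t
    show "F s t = (t - r1)*(t - r2)*(t - r3)*(t - r4)"
      unfolding r1_def
      by (rule quartic_fac[of "F s" a3 "-6*S^2-6" 4 1])
         (use f2 f3 f4 n23 n34 n24 in \<open>simp_all add: F_def S_def a3_def r2_def r3_def r4_def\<close>)
  qed
  have e1: "r1 = -4*S^3 + 4*S^2 - 8*S + 4 - 3/2*x - 3/2*x^2 + (-(t2+t3+t4))*x^4"
    unfolding r1_def a3_def r2_def r3_def r4_def B2_def B3_def B4_def
    by (simp add: algebra_simps add_divide_distrib diff_divide_distrib)
  have e2: "r2 = (1+w)/2*x + (3+w)/6*x^2 - w/9*x^3 + t2*x^4" unfolding r2_def B2_def by simp
  have e3: "r3 = 1/2*x + 1/2*x^2 - (-t3)*x^4" unfolding r3_def B3_def by simp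
  have e4: "r4 = (1-w)/2*x + (3-w)/6*x^2 + w/9*x^3 + t4*x^4" unfolding r4_def B4_def by simp
  show ?thesis
    unfolding S_def[symmetric] p1 w_def[symmetric] iw2
    apply (rule exI[of _ r1], rule exI[of _ r2], rule exI[of _ r3], rule exI[of _ r4])
    apply (rule exI[of _ "-(t2+t3+t4)"], rule exI[of _ t2], rule exI[of _ "-t3"], rule exI[of _ t4])
    using fac e1 e2 e3 e4 t2 t3 t4 by simp
qed
end
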